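(* Let $B$ be a left-free $H$-$G$-biset with a finite basis $S$, and let $g\in G$. Choose a basis $S$ and write $\Phi(g)=\langle h_s\rangle_{s\in S}\pi$ for the associated wreath map; let $S_1,\dots,S_\ell$ be the orbits of $\pi$ on $S$, and for each $j$, writing $S_j=\{s_1,\dots,s_{d_j}\}$ with $s_i^\pi=s_{i+1}$ (indices modulo $d_j$), let $k_j=h_{s_1}h_{s_2}\cdots h_{s_{d_j}}$. Then the multiset $\{(d_j,k_j^H)\mid j=1,\dots,\ell\}$ of pairs (degree, $H$-conjugacy class), called the lift of $g^G$, is independent of the choice of $g$ in its conjugacy class $g^G$, of the basis $S$, and of the cyclic ordering chosen for each orbit $S_j$.
   Context: An $H$-$G$-biset $B$ is left-free if as a left $H$-set it is isomorphic to $H\times S$; a basis is a subset $S$ containing exactly one element from each left $H$-orbit. The wreath map $\Phi\colon G\to H\wr\mathrm{Sym}(S)$ is defined by $\Phi(g)=\langle h_s\rangle_{s\in S}\pi$ where $sg=h_s\,s^\pi$ for all $s\in S$ (with $h_s\in H$, $s^\pi\in S$). $k^H$ denotes the conjugacy class of $k$ in $H$. *)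

theory Defs
  imports "HOL-Algebra.Group" "HOL-Library.Multiset"
begin

definition biset ::
  "('h, 'a) monoid_scheme \<Rightarrow> ('g, 'c) monoid_scheme \<Rightarrow> 'b set
   \<Rightarrow> ('h \<Rightarrow> 'b \<Rightarrow> 'b) \<Rightarrow> ('b \<Rightarrow> 'g \<Rightarrow> 'b) \<Rightarrow> bool" where
  "biset H G X l r \<longleftrightarrow> group H \<and> group G \<and>
     (\<forall>h\<in>carrier H. \<forall>b\<in>X. l h b \<in> X) \<and>
     (\<forall>b\<in>X. l \<one>\<^bsub>H\<^esub> b = b) \<and>
     (\<forall>h1\<in>carrier H. \<forall>h2\<in>carrier H. \<forall>b\<in>X. l (h1 \<otimes>\<^bsub>H\<^esub> h2) b = l h1 (l h2 b)) \<and>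
     (\<forall>g\<in>carrier G. \<forall>b\<in>X. r b g \<in> X) \<and>
     (\<forall>b\<in>X. r b \<one>\<^bsub>G\<^esub> = b) \<and>
     (\<forall>g1\<in>carrier G. \<forall>g2\<in>carrier G. \<forall>b\<in>X. r b (g1 \<otimes>\<^bsub>G\<^esub> g2) = r (r b g1) g2) \<and>
     (\<forall>h\<in>carrier H. \<forall>g\<in>carrier G. \<forall>b\<in>X. l h (r b g) = r (l h b) g)"

definition left_free ::
  "('h, 'a) monoid_scheme \<Rightarrow> 'b set \<Rightarrow> ('h \<Rightarrow> 'b \<Rightarrow> 'b) \<Rightarrow> bool" where
  "left_free H X l \<longleftrightarrow>
     (\<exists>S. S \<subseteq> X \<and> bij_betw (\<lambda>(h, s). l h s) (carrier H \<times> S) X)"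

definition left_orbit ::
  "('h, 'a) monoid_scheme \<Rightarrow> ('h \<Rightarrow> 'b \<Rightarrow> 'b) \<Rightarrow> 'b \<Rightarrow> 'b set" where
  "left_orbit H l b = {l h b | h. h \<in> carrier H}"

definition is_basis ::
  "('h, 'a) monoid_scheme \<Rightarrow> 'b set \<Rightarrow> ('h \<Rightarrow> 'b \<Rightarrow> 'b) \<Rightarrow> 'b set \<Rightarrow> bool" where
  "is_basis H X l S \<longleftrightarrow> S \<subseteq> X \<and>
     (\<forall>b\<in>X. \<exists>!s. s \<in> S \<and> s \<in> left_orbit H l b)"

text \<open>Wreath map \<Phi>(g) = \<langle>h_s\<rangle> \<pi>, where s g = h_s s^\<pi>.\<close>
definition wperm ::
  "('h, 'a) monoid_scheme \<Rightarrow> ('h \<Rightarrow> 'b \<Rightarrow> 'b) \<Rightarrow> ('b \<Rightarrow> 'g \<Rightarrow> 'b)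
   \<Rightarrow> 'b set \<Rightarrow> 'g \<Rightarrow> 'b \<Rightarrow> 'b" where
  "wperm H l r S g s = (THE t. t \<in> S \<and> (\<exists>h\<in>carrier H. r s g = l h t))"

definition wcoef ::
  "('h, 'a) monoid_scheme \<Rightarrow> ('h \<Rightarrow> 'b \<Rightarrow> 'b) \<Rightarrow> ('b \<Rightarrow> 'g \<Rightarrow> 'b)
   \<Rightarrow> 'b set \<Rightarrow> 'g \<Rightarrow> 'b \<Rightarrow> 'h" where
  "wcoef H l r S g s = (THE h. h \<in> carrier H \<and> r s g = l h (wperm H l r S g s))"

definition perm_orbit :: "('b \<Rightarrow> 'b) \<Rightarrow> 'b \<Rightarrow> 'b set" where
  "perm_orbit p s = {(p ^^ n) s | n. True}"

definition wreath_orbits ::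
  "('h, 'a) monoid_scheme \<Rightarrow> ('h \<Rightarrow> 'b \<Rightarrow> 'b) \<Rightarrow> ('b \<Rightarrow> 'g \<Rightarrow> 'b)
   \<Rightarrow> 'b set \<Rightarrow> 'g \<Rightarrow> 'b set set" where
  "wreath_orbits H l r S g = perm_orbit (wperm H l r S g) ` S"

fun cycle_prod ::
  "('h, 'a) monoid_scheme \<Rightarrow> ('h \<Rightarrow> 'b \<Rightarrow> 'b) \<Rightarrow> ('b \<Rightarrow> 'g \<Rightarrow> 'b)
   \<Rightarrow> 'b set \<Rightarrow> 'g \<Rightarrow> 'b \<Rightarrow> nat \<Rightarrow> 'h" where
  "cycle_prod H l r S g s 0 = \<one>\<^bsub>H\<^esub>"
| "cycle_prod H l r S g s (Suc n) =
     wcoef H l r S g s \<otimes>\<^bsub>H\<^esub> cycle_prod H l r S g (wperm H l r S g s) n"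

definition conj_class :: "('h, 'a) monoid_scheme \<Rightarrow> 'h \<Rightarrow> 'h set" where
  "conj_class H k = {x \<otimes>\<^bsub>H\<^esub> k \<otimes>\<^bsub>H\<^esub> inv\<^bsub>H\<^esub> x | x. x \<in> carrier H}"

text \<open>The lift of g^G, computed from basis S, element g and a choice rep Q \<in> Q
of starting point s_1 in each orbit O of \<pi> (which fixes the cyclic ordering).\<close>
definition lift ::
  "('h, 'a) monoid_scheme \<Rightarrow> ('h \<Rightarrow> 'b \<Rightarrow> 'b) \<Rightarrow> ('b \<Rightarrow> 'g \<Rightarrow> 'b)
   \<Rightarrow> 'b set \<Rightarrow> 'g \<Rightarrow> ('b set \<Rightarrow> 'b) \<Rightarrow> (nat \<times> 'h set) multiset" where
  "lift H l r S g rep =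
     image_mset (\<lambda>Q. (card Q, conj_class H (cycle_prod H l r S g (rep Q) (card Q))))
       (mset_set (wreath_orbits H l r S g))"

end

theory Submission
  imports Defs
begin

lemma funpow_inj_on:
  assumes "inj_on f S" "f ` S \<subseteq> S" "x \<in> S" "y \<in> S" "(f ^^ n) x = (f ^^ n) y"
  shows "x = y"
  using assms(3-5)
proof (induction n arbitrary: x y)
  case 0 then show ?case by simp
next
  case (Suc n)
  have "(f ^^ n) (f x) = (f ^^ n) (f y)" using Suc.prems by (simp add: funpow_Suc_right del: funpow.simps)
  then have "f x = f y" using Suc.IH Suc.prems assms(2) by blast
  then show ?case using assms(1) Suc.prems unfolding inj_on_def by metis
qed

lemma funpow_in: "f ` S \<subseteq> S \<Longrightarrow> x \<in> S \<Longrightarrow> (f ^^ n) x \<in> S"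
  by (induction n) auto

lemma funpow_back:
  assumes "inj_on f S" "f ` S \<subseteq> S" "x \<in> S" "i < j" "(f ^^ i) x = (f ^^ j) x"
  shows "(f ^^ (j - i)) x = x"
proof -
  have e: "(f ^^ (i + (j - i))) x = (f ^^ i) ((f ^^ (j - i)) x)" by (simp add: funpow_add)
  have "i + (j - i) = j" using assms(4) by simp
  with e assms(5) have "(f ^^ i) x = (f ^^ i) ((f ^^ (j - i)) x)" by simp
  then show ?thesis using funpow_inj_on[OF assms(1,2) assms(3)] funpow_in[OF assms(2,3)] by metis
qed

lemma exists_period:
  assumes "finite S" "inj_on f S" "f ` S \<subseteq> S" "x \<in> S"
  shows "\<exists>n>0. (f ^^ n) x = x"
proof -
  have "\<not> inj_on (\<lambda>i. (f ^^ i) x) {..card S}"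
  proof
    assume "inj_on (\<lambda>i. (f ^^ i) x) {..card S}"
    then have "card ((\<lambda>i. (f ^^ i) x) ` {..card S}) = Suc (card S)" by (simp add: card_image)
    moreover have "(\<lambda>i. (f ^^ i) x) ` {..card S} \<subseteq> S" using funpow_in[OF assms(3,4)] by blast
    then have "card ((\<lambda>i. (f ^^ i) x) ` {..card S}) \<le> card S" by (rule card_mono[OF assms(1)])
    ultimately show False by simp
  qed
  then obtain i j where ij: "i \<noteq> j" "(f ^^ i) x = (f ^^ j) x"
    unfolding inj_on_def by blast
  show ?thesis
  proof (cases "i < j")
    case True
    then show ?thesis using funpow_back[OF assms(2-4) True ij(2)] by (intro exI[of _ "j - i"]) auto
  next
    case False
    then have "j < i" using ij by simp
    then show ?thesis using funpow_back[OF assms(2-4) \<open>j<i\<close>] ij(2) by (intro exI[of _ "i - j"]) auto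
  qed
qed

definition period :: "('a \<Rightarrow> 'a) \<Rightarrow> 'a \<Rightarrow> nat" where
  "period f x = (LEAST n. n > 0 \<and> (f ^^ n) x = x)"

context
  fixes f S x
  assumes fin: "finite S" and inj: "inj_on f S" and img: "f ` S \<subseteq> S" and xS: "x \<in> S"
begin

lemma period_pos: "period f x > 0" and period_fix: "(f ^^ period f x) x = x"
  using LeastI_ex[OF exists_period[OF fin inj img xS]] unfolding period_def by auto

lemma period_least: "0 < m \<Longrightarrow> m < period f x \<Longrightarrow> (f ^^ m) x \<noteq> x"
  unfolding period_def using not_less_Least by blast

lemma period_mult: "(f ^^ (period f x * q)) x = x"
proof (induction q)
  case 0 then show ?case by simp
next
  case (Suc q)
  have "(f ^^ (period f x * Suc q)) x = (f ^^ period f x) ((f ^^ (period f x * q)) x)"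
    by (simp add: funpow_add)
  then show ?case using Suc period_fix by simp
qed

lemma funpow_mod: "(f ^^ n) x = (f ^^ (n mod period f x)) x"
proof -
  have e: "(f ^^ (n mod period f x + period f x * (n div period f x))) x
     = (f ^^ (n mod period f x)) ((f ^^ (period f x * (n div period f x))) x)"
    by (simp only: funpow_add comp_apply)
  have "n mod period f x + period f x * (n div period f x) = n" by (rule mod_mult_div_eq)
  with e period_mult show ?thesis by simp
qed

lemma perm_orbit_alt: "perm_orbit f x = (\<lambda>i. (f ^^ i) x) ` {..<period f x}"
proof
  show "perm_orbit f x \<subseteq> (\<lambda>i. (f ^^ i) x) ` {..<period f x}"
  proof
    fix z assume "z \<in> perm_orbit f x"
    then obtain n where n: "z = (f ^^ n) x" unfolding perm_orbit_def by blast
    have "n mod period f x < period f x" using period_pos by simp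
    moreover have "z = (f ^^ (n mod period f x)) x" using n funpow_mod[of n] by simp
    ultimately show "z \<in> (\<lambda>i. (f ^^ i) x) ` {..<period f x}" by blast
  qed
  show "(\<lambda>i. (f ^^ i) x) ` {..<period f x} \<subseteq> perm_orbit f x"
    unfolding perm_orbit_def by blast
qed

lemma inj_period: "inj_on (\<lambda>i. (f ^^ i) x) {..<period f x}"
proof (rule inj_onI, rule ccontr)
  fix i j assume ij: "i \<in> {..<period f x}" "j \<in> {..<period f x}" "(f ^^ i) x = (f ^^ j) x" "i \<noteq> j"
  show False
  proof (cases "i < j")
    case True
    have "0 < j - i" "j - i < period f x" using True ij by auto
    from period_least[OF this] funpow_back[OF inj img xS True ij(3)] show False by simp
  next
    case False
    then have "j < i" using ij by simp
    have "0 < i - j" "i - j < period f x" using \<open>j<i\<close> ij by auto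
    from period_least[OF this] funpow_back[OF inj img xS \<open>j<i\<close>] ij(3) show False by simp
  qed
qed

lemma card_perm_orbit: "card (perm_orbit f x) = period f x"
  unfolding perm_orbit_alt using inj_period by (simp add: card_image)

lemma perm_orbit_sub: "perm_orbit f x \<subseteq> S"
  unfolding perm_orbit_def using funpow_in[OF img xS] by blast

lemma self_in_perm_orbit: "x \<in> perm_orbit f x"
proof -
  have "x = (f ^^ 0) x" by simp
  then show ?thesis unfolding perm_orbit_def by blast
qed

lemma perm_orbit_same:
  assumes "y \<in> perm_orbit f x" shows "perm_orbit f y = perm_orbit f x"
proof -
  obtain i where i: "y = (f ^^ i) x" using assms unfolding perm_orbit_def by blast
  show ?thesis
  proof
    show "perm_orbit f y \<subseteq> perm_orbit f x"
    proof
      fix z assume "z \<in> perm_orbit f y"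
      then obtain n where n: "z = (f ^^ n) y" unfolding perm_orbit_def by blast
      have "(f ^^ (n + i)) x = (f ^^ n) ((f ^^ i) x)" by (simp add: funpow_add)
      then have "z = (f ^^ (n + i)) x" using n i by simp
      then show "z \<in> perm_orbit f x" unfolding perm_orbit_def by blast
    qed
  next
    show "perm_orbit f x \<subseteq> perm_orbit f y"
    proof
      fix z assume "z \<in> perm_orbit f x"
      then obtain m where m: "z = (f ^^ m) x" unfolding perm_orbit_def by blast
      obtain P where P: "P = period f x * i" by simp
      have "i \<le> P" using period_pos P by simp
      then have k: "(m + P - i) + i = m + P" by simp
      have "(f ^^ ((m + P - i) + i)) x = (f ^^ (m + P - i)) y"
        unfolding i by (simp add: funpow_add)
      then have "(f ^^ (m + P - i)) y = (f ^^ (m + P)) x" using k by simp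
      also have "\<dots> = (f ^^ m) ((f ^^ P) x)" by (simp add: funpow_add)
      also have "\<dots> = z" unfolding m P using period_mult by simp
      finally show "z \<in> perm_orbit f y" unfolding perm_orbit_def by blast
    qed
  qed
qed

end

lemma conj_class_conj:
  assumes "group H" "a \<in> carrier H" "k \<in> carrier H"
  shows "conj_class H (a \<otimes>\<^bsub>H\<^esub> k \<otimes>\<^bsub>H\<^esub> inv\<^bsub>H\<^esub> a) = conj_class H k"
proof -
  interpret group H by fact
  have c1: "\<And>w. w \<in> carrier H \<Longrightarrow> inv\<^bsub>H\<^esub> a \<otimes>\<^bsub>H\<^esub> (a \<otimes>\<^bsub>H\<^esub> w) = w"
    using assms by (simp add: m_assoc[symmetric])
  have c2: "\<And>w. w \<in> carrier H \<Longrightarrow> a \<otimes>\<^bsub>H\<^esub> (inv\<^bsub>H\<^esub> a \<otimes>\<^bsub>H\<^esub> w) = w"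
    using assms by (simp add: m_assoc[symmetric])
  show ?thesis unfolding conj_class_def
  proof (intro Set.set_eqI iffI)
    fix z assume "z \<in> {x \<otimes>\<^bsub>H\<^esub> (a \<otimes>\<^bsub>H\<^esub> k \<otimes>\<^bsub>H\<^esub> inv\<^bsub>H\<^esub> a) \<otimes>\<^bsub>H\<^esub> inv\<^bsub>H\<^esub> x |x. x \<in> carrier H}"
    then obtain x where x: "x \<in> carrier H" "z = x \<otimes>\<^bsub>H\<^esub> (a \<otimes>\<^bsub>H\<^esub> k \<otimes>\<^bsub>H\<^esub> inv\<^bsub>H\<^esub> a) \<otimes>\<^bsub>H\<^esub> inv\<^bsub>H\<^esub> x" by blast
    have "z = (x \<otimes>\<^bsub>H\<^esub> a) \<otimes>\<^bsub>H\<^esub> k \<otimes>\<^bsub>H\<^esub> inv\<^bsub>H\<^esub> (x \<otimes>\<^bsub>H\<^esub> a)" using x assms by (simp add: m_assoc inv_mult_group c1 c2)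
    then show "z \<in> {x \<otimes>\<^bsub>H\<^esub> k \<otimes>\<^bsub>H\<^esub> inv\<^bsub>H\<^esub> x |x. x \<in> carrier H}" using x assms by blast
  next
    fix z assume "z \<in> {x \<otimes>\<^bsub>H\<^esub> k \<otimes>\<^bsub>H\<^esub> inv\<^bsub>H\<^esub> x |x. x \<in> carrier H}"
    then obtain x where x: "x \<in> carrier H" "z = x \<otimes>\<^bsub>H\<^esub> k \<otimes>\<^bsub>H\<^esub> inv\<^bsub>H\<^esub> x" by blast
    have "z = (x \<otimes>\<^bsub>H\<^esub> inv\<^bsub>H\<^esub> a) \<otimes>\<^bsub>H\<^esub> (a \<otimes>\<^bsub>H\<^esub> k \<otimes>\<^bsub>H\<^esub> inv\<^bsub>H\<^esub> a) \<otimes>\<^bsub>H\<^esub> inv\<^bsub>H\<^esub> (x \<otimes>\<^bsub>H\<^esub> inv\<^bsub>H\<^esub> a)"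
      using x assms by (simp add: m_assoc inv_mult_group c1 c2)
    then show "z \<in> {x \<otimes>\<^bsub>H\<^esub> (a \<otimes>\<^bsub>H\<^esub> k \<otimes>\<^bsub>H\<^esub> inv\<^bsub>H\<^esub> a) \<otimes>\<^bsub>H\<^esub> inv\<^bsub>H\<^esub> x |x. x \<in> carrier H}" using x assms by blast
  qed
qed

locale fbis =
  fixes H :: "('h, 'a) monoid_scheme" and G :: "('g, 'c) monoid_scheme"
    and X :: "'b set" and l :: "'h \<Rightarrow> 'b \<Rightarrow> 'b" and r :: "'b \<Rightarrow> 'g \<Rightarrow> 'b"
  assumes bis: "biset H G X l r" and lf: "left_free H X l"
begin

lemma grpH: "group H" and grpG: "group G" using bis by (auto simp: biset_def)

sublocale H: group H by (rule grpH)
sublocale G: group G by (rule grpG)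

lemma l_X: "h \<in> carrier H \<Longrightarrow> b \<in> X \<Longrightarrow> l h b \<in> X"
  and l_one: "b \<in> X \<Longrightarrow> l \<one>\<^bsub>H\<^esub> b = b"
  and l_mult: "h1 \<in> carrier H \<Longrightarrow> h2 \<in> carrier H \<Longrightarrow> b \<in> X \<Longrightarrow> l (h1 \<otimes>\<^bsub>H\<^esub> h2) b = l h1 (l h2 b)"
  and r_X: "g \<in> carrier G \<Longrightarrow> b \<in> X \<Longrightarrow> r b g \<in> X"
  and r_one: "b \<in> X \<Longrightarrow> r b \<one>\<^bsub>G\<^esub> = b"
  and r_mult: "g1 \<in> carrier G \<Longrightarrow> g2 \<in> carrier G \<Longrightarrow> b \<in> X \<Longrightarrow> r b (g1 \<otimes>\<^bsub>G\<^esub> g2) = r (r b g1) g2"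
  and lr: "h \<in> carrier H \<Longrightarrow> g \<in> carrier G \<Longrightarrow> b \<in> X \<Longrightarrow> l h (r b g) = r (l h b) g"
  using bis unfolding biset_def by blast+

lemma l_back: "b \<in> X \<Longrightarrow> h \<in> carrier H \<Longrightarrow> l (inv\<^bsub>H\<^esub> h) (l h b) = b"
  by (metis H.inv_closed H.l_inv l_mult l_one)

lemma r_back: "b \<in> X \<Longrightarrow> g \<in> carrier G \<Longrightarrow> r (r b g) (inv\<^bsub>G\<^esub> g) = b"
  by (metis G.inv_closed G.r_inv r_mult r_one)

lemma free:
  assumes "y \<in> X" "h \<in> carrier H" "h' \<in> carrier H" "l h y = l h' y"
  shows "h = h'"
proof -
  obtain S0 where S0: "S0 \<subseteq> X" "bij_betw (\<lambda>(h, s). l h s) (carrier H \<times> S0) X"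
    using lf unfolding left_free_def by blast
  obtain a s where as: "a \<in> carrier H" "s \<in> S0" "y = l a s"
    using S0(2) assms(1) unfolding bij_betw_def by force
  have sX: "s \<in> X" using as S0 by blast
  have "l (h \<otimes>\<^bsub>H\<^esub> a) s = l (h' \<otimes>\<^bsub>H\<^esub> a) s"
    using assms as sX by (simp add: l_mult)
  then have "(h \<otimes>\<^bsub>H\<^esub> a, s) = (h' \<otimes>\<^bsub>H\<^esub> a, s)"
    using S0(2) as assms unfolding bij_betw_def inj_on_def by (metis (no_types, lifting) H.m_closed SigmaI case_prod_conv)
  then show ?thesis using as assms by simp
qed

lemma left_orbit_l: "z \<in> X \<Longrightarrow> h \<in> carrier H \<Longrightarrow> left_orbit H l (l h z) = left_orbit H l z"
proof (unfold left_orbit_def, intro Set.set_eqI iffI)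
  fix w assume a: "z \<in> X" "h \<in> carrier H" "w \<in> {l ha (l h z) |ha. ha \<in> carrier H}"
  then obtain c where "c \<in> carrier H" "w = l c (l h z)" by blast
  then show "w \<in> {l ha z |ha. ha \<in> carrier H}" using a by (metis (mono_tags) H.m_closed l_mult mem_Collect_eq)
next
  fix w assume a: "z \<in> X" "h \<in> carrier H" "w \<in> {l ha z |ha. ha \<in> carrier H}"
  then obtain c where c: "c \<in> carrier H" "w = l c z" by blast
  then have "w = l (c \<otimes>\<^bsub>H\<^esub> inv\<^bsub>H\<^esub> h) (l h z)" using a
    by (simp add: l_mult[symmetric] H.m_assoc)
  then show "w \<in> {l ha (l h z) |ha. ha \<in> carrier H}" using a c by blast
qed

lemma self_left_orbit: "z \<in> X \<Longrightarrow> z \<in> left_orbit H l z"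
  unfolding left_orbit_def using l_one by force

end

locale fbasis0 = fbis H G X l r
  for H :: "('h, 'a) monoid_scheme" and G :: "('g, 'c) monoid_scheme"
    and X :: "'b set" and l :: "'h \<Rightarrow> 'b \<Rightarrow> 'b" and r :: "'b \<Rightarrow> 'g \<Rightarrow> 'b" +
  fixes S :: "'b set"
  assumes basis: "is_basis H X l S"
begin

lemma S_X: "S \<subseteq> X" using basis unfolding is_basis_def by blast

lemma in_orbit: "y \<in> X \<Longrightarrow> h \<in> carrier H \<Longrightarrow> l h y \<in> left_orbit H l y"
  unfolding left_orbit_def by blast

lemma decomp:
  assumes "y \<in> X" shows "\<exists>h\<in>carrier H. \<exists>s\<in>S. y = l h s"
proof -
  obtain s where s: "s \<in> S" "s \<in> left_orbit H l y" using basis assms unfolding is_basis_def by blast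
  then obtain a where a: "a \<in> carrier H" "s = l a y" unfolding left_orbit_def by blast
  have "y = l (inv\<^bsub>H\<^esub> a) s" using a assms l_back by simp
  then show ?thesis using a s by blast
qed

lemma uniq:
  assumes "s \<in> S" "t \<in> S" "h \<in> carrier H" "h' \<in> carrier H" "l h s = l h' t"
  shows "s = t \<and> h = h'"
proof -
  define y where "y = l h s"
  have sX: "s \<in> X" "t \<in> X" using S_X assms by auto
  have yX: "y \<in> X" unfolding y_def using sX assms l_X by blast
  have "s = l (inv\<^bsub>H\<^esub> h) y" unfolding y_def using l_back[of s h] sX(1) assms(3) by simp
  then have s1: "s \<in> left_orbit H l y" using in_orbit yX assms by simp
  have "t = l (inv\<^bsub>H\<^esub> h') y" unfolding y_def assms(5) using l_back[of t h'] sX(2) assms(4) by simp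
  then have t1: "t \<in> left_orbit H l y" using in_orbit yX assms by simp
  have st: "s = t" using basis yX s1 t1 assms unfolding is_basis_def by blast
  then show ?thesis using free[of t h h'] sX assms st by simp
qed

lemma left_orbit_inj: "inj_on (left_orbit H l) S"
proof (rule inj_onI)
  fix s t assume st: "s \<in> S" "t \<in> S" "left_orbit H l s = left_orbit H l t"
  then have "s \<in> left_orbit H l t" using self_left_orbit S_X by blast
  then obtain a where a: "a \<in> carrier H" "s = l a t" unfolding left_orbit_def by blast
  then have "l \<one>\<^bsub>H\<^esub> s = l a t" using l_one S_X st by auto
  from uniq[OF st(1,2) H.one_closed a(1) this] show "s = t" by simp
qed

context fixes g assumes g: "g \<in> carrier G"
begin

lemma wp:
  assumes "y \<in> X"
  shows "wperm H l r S g y \<in> S" "wcoef H l r S g y \<in> carrier H"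
    "r y g = l (wcoef H l r S g y) (wperm H l r S g y)"
proof -
  obtain h t where ht: "h \<in> carrier H" "t \<in> S" "r y g = l h t" using decomp r_X g assms by blast
  have wt: "wperm H l r S g y = t" unfolding wperm_def
  proof (rule the_equality)
    show "t \<in> S \<and> (\<exists>h\<in>carrier H. r y g = l h t)" using ht by blast
  next
    fix x assume "x \<in> S \<and> (\<exists>h\<in>carrier H. r y g = l h x)"
    then obtain h' where "x \<in> S" "h' \<in> carrier H" "l h' x = l h t" using ht by metis
    from uniq[OF this(1) ht(2) this(2) ht(1) this(3)] show "x = t" by simp
  qed
  have "wcoef H l r S g y = h" unfolding wcoef_def wt
  proof (rule the_equality)
    show "h \<in> carrier H \<and> r y g = l h t" using ht by blast
  next
    fix x assume "x \<in> carrier H \<and> r y g = l x t"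
    then have "x \<in> carrier H" "l x t = l h t" using ht by auto
    from uniq[OF ht(2) ht(2) this(1) ht(1) this(2)] show "x = h" by simp
  qed
  then show "wperm H l r S g y \<in> S" "wcoef H l r S g y \<in> carrier H"
    "r y g = l (wcoef H l r S g y) (wperm H l r S g y)" using wt ht by auto
qed

lemma pi_img: "wperm H l r S g ` S \<subseteq> S" using wp S_X by blast

lemma pi_inj: "inj_on (wperm H l r S g) S"
proof (rule inj_onI)
  fix s t assume st: "s \<in> S" "t \<in> S" "wperm H l r S g s = wperm H l r S g t"
  define u where "u = wperm H l r S g s"
  define a where "a = wcoef H l r S g s"
  define b where "b = wcoef H l r S g t"
  have X: "s \<in> X" "t \<in> X" using st S_X by auto
  have ab: "a \<in> carrier H" "b \<in> carrier H" unfolding a_def b_def using wp X by auto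
  have uX: "u \<in> X" unfolding u_def using wp X S_X by auto
  have rs: "r s g = l a u" unfolding a_def u_def using wp X by simp
  have rt: "r t g = l b u" unfolding b_def u_def using wp X st by simp
  define c where "c = b \<otimes>\<^bsub>H\<^esub> inv\<^bsub>H\<^esub> a"
  have c: "c \<in> carrier H" unfolding c_def using ab by simp
  have "l c (r s g) = l b u" unfolding rs c_def using ab uX
    by (simp add: l_mult[symmetric] H.m_assoc)
  then have "r (l c s) g = r t g" using rt lr c g X by simp
  then have "r (r (l c s) g) (inv\<^bsub>G\<^esub> g) = r (r t g) (inv\<^bsub>G\<^esub> g)" by simp
  moreover have "l c s \<in> X" using l_X c X by blast
  ultimately have "l c s = t" using r_back g X by simp
  then have "l c s = l \<one>\<^bsub>H\<^esub> t" using l_one X by simp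
  then show "s = t" using uniq st c by blast
qed

lemma cp_A:
  assumes "s \<in> S"
  shows "cycle_prod H l r S g s n \<in> carrier H \<and>
    r s (g [^]\<^bsub>G\<^esub> n) = l (cycle_prod H l r S g s n) ((wperm H l r S g ^^ n) s)"
  using assms
proof (induction n arbitrary: s)
  case 0
  then show ?case using l_one r_one S_X by auto
next
  case (Suc n)
  define t where "t = wperm H l r S g s"
  define h where "h = wcoef H l r S g s"
  have sX: "s \<in> X" using Suc S_X by auto
  have t: "t \<in> S" "h \<in> carrier H" "r s g = l h t" unfolding t_def h_def using wp sX by auto
  have IH: "cycle_prod H l r S g t n \<in> carrier H \<and>
    r t (g [^]\<^bsub>G\<^esub> n) = l (cycle_prod H l r S g t n) ((wperm H l r S g ^^ n) t)"
    using Suc.IH t by blast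
  have tX: "t \<in> X" using t S_X by auto
  have "r s (g [^]\<^bsub>G\<^esub> Suc n) = r (r s g) (g [^]\<^bsub>G\<^esub> n)"
    using G.nat_pow_Suc2 g r_mult sX by simp
  also have "\<dots> = l h (r t (g [^]\<^bsub>G\<^esub> n))" using t lr g tX by simp
  also have "\<dots> = l (h \<otimes>\<^bsub>H\<^esub> cycle_prod H l r S g t n) ((wperm H l r S g ^^ n) t)"
  proof -
    have "(wperm H l r S g ^^ n) t \<in> X" using funpow_in[OF pi_img t(1)] S_X by blast
    then show ?thesis using IH t by (simp add: l_mult)
  qed
  finally show ?case using IH t
    by (simp add: t_def h_def funpow_Suc_right del: funpow.simps)
qed

lemma cp_closed: "s \<in> S \<Longrightarrow> cycle_prod H l r S g s n \<in> carrier H"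
  using cp_A by blast

lemma cp_add:
  assumes "s \<in> S"
  shows "cycle_prod H l r S g s (m + n) =
    cycle_prod H l r S g s m \<otimes>\<^bsub>H\<^esub> cycle_prod H l r S g ((wperm H l r S g ^^ m) s) n"
  using assms
proof (induction m arbitrary: s)
  case 0
  then show ?case using cp_closed by simp
next
  case (Suc m)
  have t: "wperm H l r S g s \<in> S" "wcoef H l r S g s \<in> carrier H" using wp Suc S_X by auto
  show ?case using Suc.IH[OF t(1)] t cp_closed funpow_in[OF pi_img t(1)]
    by (simp add: H.m_assoc funpow_Suc_right del: funpow.simps)
qed

lemma cp_one: "s \<in> S \<Longrightarrow> cycle_prod H l r S g s 1 = wcoef H l r S g s"
  using wp S_X by auto

lemma cp_shift_class:
  assumes "s \<in> S" "(wperm H l r S g ^^ d) s = s"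
  shows "conj_class H (cycle_prod H l r S g (wperm H l r S g s) d) = conj_class H (cycle_prod H l r S g s d)"
proof -
  let ?p = "wperm H l r S g" and ?cp = "cycle_prod H l r S g"
  define h where "h = wcoef H l r S g s"
  have h: "h \<in> carrier H" unfolding h_def using wp assms S_X by auto
  have ps: "?p s \<in> S" using wp assms S_X by auto
  have e1: "?cp s (d + 1) = ?cp s d \<otimes>\<^bsub>H\<^esub> h" using cp_add[OF assms(1), of d 1] assms cp_one h_def by simp
  have e2: "?cp s (1 + d) = h \<otimes>\<^bsub>H\<^esub> ?cp (?p s) d" using cp_add[OF assms(1), of 1 d] assms cp_one h_def by simp
  have k: "?cp s d \<in> carrier H" "?cp (?p s) d \<in> carrier H" using cp_closed assms ps by auto
  have "?cp (?p s) d = inv\<^bsub>H\<^esub> h \<otimes>\<^bsub>H\<^esub> ?cp s d \<otimes>\<^bsub>H\<^esub> inv\<^bsub>H\<^esub> (inv\<^bsub>H\<^esub> h)"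
  proof -
    have "h \<otimes>\<^bsub>H\<^esub> ?cp (?p s) d = ?cp s d \<otimes>\<^bsub>H\<^esub> h" using e1 e2 by (simp add: add.commute)
    then have "inv\<^bsub>H\<^esub> h \<otimes>\<^bsub>H\<^esub> (h \<otimes>\<^bsub>H\<^esub> ?cp (?p s) d) = inv\<^bsub>H\<^esub> h \<otimes>\<^bsub>H\<^esub> (?cp s d \<otimes>\<^bsub>H\<^esub> h)" by simp
    then show ?thesis using h k by (simp add: H.m_assoc[symmetric])
  qed
  then show ?thesis using conj_class_conj[OF grpH, of "inv\<^bsub>H\<^esub> h" "?cp s d"] h k by simp
qed

lemma cp_iter_class:
  assumes "s \<in> S" "(wperm H l r S g ^^ d) s = s"
  shows "conj_class H (cycle_prod H l r S g ((wperm H l r S g ^^ i) s) d) = conj_class H (cycle_prod H l r S g s d)"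
proof (induction i)
  case 0 then show ?case by simp
next
  case (Suc i)
  let ?p = "wperm H l r S g"
  have inS: "(?p ^^ i) s \<in> S" using funpow_in[OF pi_img assms(1)] .
  have "(?p ^^ d) ((?p ^^ i) s) = (?p ^^ i) ((?p ^^ d) s)"
    by (metis comp_apply funpow_add add.commute)
  then have "(?p ^^ d) ((?p ^^ i) s) = (?p ^^ i) s" using assms by simp
  from cp_shift_class[OF inS this] Suc show ?case by simp
qed

end
end

definition Rm :: "(nat \<times> 'x) multiset \<Rightarrow> (nat \<times> 'x) multiset" where
  "Rm M = sum_mset (image_mset (\<lambda>v. replicate_mset (fst v) v) M)"

lemma Rm_add: "Rm (add_mset x M) = replicate_mset (fst x) x + Rm M"
  unfolding Rm_def by simp

lemma count_Rm: "count (Rm M) v = fst v * count M v"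
proof (induction M)
  case empty then show ?case by (simp add: Rm_def)
next
  case (add x M)
  then show ?case unfolding Rm_add by (simp add: count_replicate_mset)
qed

lemma Rm_inj:
  assumes "\<forall>v\<in>#M. 0 < fst v" "\<forall>v\<in>#N. 0 < fst v" "Rm M = Rm N"
  shows "M = N"
proof (rule multiset_eqI)
  fix v
  show "count M v = count N v"
  proof (cases "fst v = 0")
    case True
    then have "v \<notin># M" "v \<notin># N" using assms(1,2) by auto
    then show ?thesis by (simp add: not_in_iff)
  next
    case False
    have "count (Rm M) v = count (Rm N) v" using assms(3) by simp
    then have "fst v * count M v = fst v * count N v" unfolding count_Rm .
    then show ?thesis using False by simp
  qed
qed

lemma part_sum:
  assumes "finite P" "\<forall>Q\<in>P. finite Q"
    "\<forall>Q1\<in>P. \<forall>Q2\<in>P. Q1 \<noteq> Q2 \<longrightarrow> Q1 \<inter> Q2 = {}"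
    "\<forall>Q\<in>P. \<forall>s\<in>Q. f s = F Q"
  shows "image_mset f (mset_set (\<Union>P)) = (\<Sum>Q\<in>P. replicate_mset (card Q) (F Q))"
  using assms
proof (induction P rule: finite_induct)
  case empty then show ?case by simp
next
  case (insert Q P)
  have fin1: "finite Q" using insert.prems(1) by simp
  have p0: "\<forall>Q\<in>P. finite Q" using insert.prems(1) by simp
  have fin2: "finite (\<Union>P)" using insert.hyps(1) p0 by simp
  note fin = fin1 fin2
  have disj: "Q \<inter> \<Union>P = {}"
  proof -
    have "Q \<inter> Q2 = {}" if Q2: "Q2 \<in> P" for Q2
    proof -
      have "Q \<noteq> Q2" using insert.hyps(2) Q2 by auto
      then show ?thesis using insert.prems(2) Q2 by (meson insertI1 insertI2)
    qed
    then show ?thesis by auto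
  qed
  have "image_mset f (mset_set Q) = image_mset (\<lambda>_. F Q) (mset_set Q)"
    using insert.prems(3) by (intro image_mset_cong) (simp add: fin)
  also have "\<dots> = replicate_mset (card Q) (F Q)" by (simp add: image_mset_const_eq)
  finally have e: "image_mset f (mset_set Q) = replicate_mset (card Q) (F Q)" .
  have p1: "\<forall>Q\<in>P. finite Q" using insert.prems(1) by blast
  have p2: "\<forall>Q1\<in>P. \<forall>Q2\<in>P. Q1 \<noteq> Q2 \<longrightarrow> Q1 \<inter> Q2 = {}" using insert.prems(2) by blast
  have p3: "\<forall>Q\<in>P. \<forall>s\<in>Q. f s = F Q" using insert.prems(3) by blast
  have IH: "image_mset f (mset_set (\<Union>P)) = (\<Sum>Q\<in>P. replicate_mset (card Q) (F Q))"
    using insert.IH[OF p1 p2 p3] .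
  have "image_mset f (mset_set (\<Union>(insert Q P))) = image_mset f (mset_set Q) + image_mset f (mset_set (\<Union>P))"
    using mset_set_Union[OF fin disj] by simp
  also have "\<dots> = replicate_mset (card Q) (F Q) + (\<Sum>Q\<in>P. replicate_mset (card Q) (F Q))"
    unfolding e IH ..
  finally show ?case using insert.hyps by simp
qed

lemma part_Rm:
  assumes "finite S" "\<forall>Q\<in>P. Q \<subseteq> S" "\<Union>P = S"
    "\<forall>Q1\<in>P. \<forall>Q2\<in>P. Q1 \<noteq> Q2 \<longrightarrow> Q1 \<inter> Q2 = {}"
    "\<forall>Q\<in>P. \<forall>s\<in>Q. f s = F Q" "\<forall>Q\<in>P. fst (F Q) = card Q"
  shows "image_mset f (mset_set S) = Rm (image_mset F (mset_set P))"
proof -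
  have finP: "finite P" by (rule finite_UnionD) (simp add: assms(1,3))
  have finQ: "\<forall>Q\<in>P. finite Q" using assms(1,2) finite_subset by blast
  have "image_mset f (mset_set S) = (\<Sum>Q\<in>P. replicate_mset (card Q) (F Q))"
    using part_sum[OF finP finQ assms(4,5)] assms(3) by simp
  also have "\<dots> = (\<Sum>Q\<in>P. replicate_mset (fst (F Q)) (F Q))" using assms(6) by simp
  also have "\<dots> = Rm (image_mset F (mset_set P))"
    unfolding Rm_def sum_unfold_sum_mset by (simp add: multiset.map_comp comp_def)
  finally show ?thesis .
qed

definition OS :: "('h, 'a) monoid_scheme \<Rightarrow> ('h \<Rightarrow> 'b \<Rightarrow> 'b) \<Rightarrow> ('b \<Rightarrow> 'g \<Rightarrow> 'b)
   \<Rightarrow> ('g, 'c) monoid_scheme \<Rightarrow> 'g \<Rightarrow> 'b \<Rightarrow> 'b set set" where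
  "OS H l r G g y = {left_orbit H l (r y (g [^]\<^bsub>G\<^esub> (n::nat))) | n. True}"

definition KK :: "('h, 'a) monoid_scheme \<Rightarrow> ('h \<Rightarrow> 'b \<Rightarrow> 'b) \<Rightarrow> ('b \<Rightarrow> 'g \<Rightarrow> 'b)
   \<Rightarrow> ('g, 'c) monoid_scheme \<Rightarrow> 'g \<Rightarrow> 'b \<Rightarrow> 'h" where
  "KK H l r G g y = (THE k. k \<in> carrier H \<and> r y (g [^]\<^bsub>G\<^esub> card (OS H l r G g y)) = l k y)"

definition invt :: "('h, 'a) monoid_scheme \<Rightarrow> ('h \<Rightarrow> 'b \<Rightarrow> 'b) \<Rightarrow> ('b \<Rightarrow> 'g \<Rightarrow> 'b)
   \<Rightarrow> ('g, 'c) monoid_scheme \<Rightarrow> 'g \<Rightarrow> 'b \<Rightarrow> nat \<times> 'h set" where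
  "invt H l r G g y = (card (OS H l r G g y), conj_class H (KK H l r G g y))"

context fbis
begin

lemma KK_eq:
  assumes "y \<in> X" "k \<in> carrier H" "r y (g [^]\<^bsub>G\<^esub> card (OS H l r G g y)) = l k y"
  shows "KK H l r G g y = k"
  unfolding KK_def
proof (rule the_equality)
  show "k \<in> carrier H \<and> r y (g [^]\<^bsub>G\<^esub> card (OS H l r G g y)) = l k y" using assms by simp
next
  fix x assume "x \<in> carrier H \<and> r y (g [^]\<^bsub>G\<^esub> card (OS H l r G g y)) = l x y"
  then have "x \<in> carrier H" "l x y = l k y" using assms by auto
  from free[OF assms(1) this(1) assms(2) this(2)] show "x = k" .
qed

lemma OS_l:
  assumes "y \<in> X" "a \<in> carrier H" "g \<in> carrier G"
  shows "OS H l r G g (l a y) = OS H l r G g y"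
proof -
  have "\<And>n::nat. left_orbit H l (r (l a y) (g [^]\<^bsub>G\<^esub> n)) = left_orbit H l (r y (g [^]\<^bsub>G\<^esub> n))"
  proof -
    fix n :: nat
    have gn: "g [^]\<^bsub>G\<^esub> n \<in> carrier G" using assms by simp
    have "r (l a y) (g [^]\<^bsub>G\<^esub> n) = l a (r y (g [^]\<^bsub>G\<^esub> n))" using lr[OF assms(2) gn assms(1)] by simp
    then show "left_orbit H l (r (l a y) (g [^]\<^bsub>G\<^esub> n)) = left_orbit H l (r y (g [^]\<^bsub>G\<^esub> n))"
      using left_orbit_l r_X gn assms by simp
  qed
  then show ?thesis unfolding OS_def by simp
qed

definition good where
  "good g y \<longleftrightarrow> (\<exists>k\<in>carrier H. r y (g [^]\<^bsub>G\<^esub> card (OS H l r G g y)) = l k y)"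

lemma invt_l:
  assumes "y \<in> X" "a \<in> carrier H" "g \<in> carrier G" "good g y"
  shows "invt H l r G g (l a y) = invt H l r G g y \<and> good g (l a y)"
proof -
  obtain k where k: "k \<in> carrier H" "r y (g [^]\<^bsub>G\<^esub> card (OS H l r G g y)) = l k y"
    using assms(4) unfolding good_def by blast
  define d where "d = card (OS H l r G g y)"
  have OS: "OS H l r G g (l a y) = OS H l r G g y" using OS_l assms by simp
  have gd: "g [^]\<^bsub>G\<^esub> d \<in> carrier G" using assms by simp
  define k' where "k' = a \<otimes>\<^bsub>H\<^esub> k \<otimes>\<^bsub>H\<^esub> inv\<^bsub>H\<^esub> a"
  have k': "k' \<in> carrier H" unfolding k'_def using k assms by simp
  have "r (l a y) (g [^]\<^bsub>G\<^esub> d) = l a (l k y)" using lr[OF assms(2) gd assms(1)] k d_def by simp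
  also have "\<dots> = l k' (l a y)"
  proof -
    have ka: "k' \<otimes>\<^bsub>H\<^esub> a = a \<otimes>\<^bsub>H\<^esub> k" unfolding k'_def using k assms by (simp add: H.m_assoc)
    have "l k' (l a y) = l (k' \<otimes>\<^bsub>H\<^esub> a) y" using l_mult[OF k' assms(2) assms(1)] by simp
    also have "\<dots> = l (a \<otimes>\<^bsub>H\<^esub> k) y" using ka by simp
    also have "\<dots> = l a (l k y)" using l_mult[OF assms(2) k(1) assms(1)] .
    finally show ?thesis by simp
  qed
  finally have e: "r (l a y) (g [^]\<^bsub>G\<^esub> card (OS H l r G g (l a y))) = l k' (l a y)"
    unfolding OS d_def .
  have lay: "l a y \<in> X" using l_X assms by blast
  have "KK H l r G g (l a y) = k'" using KK_eq[OF lay k' e] .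
  moreover have "KK H l r G g y = k" using KK_eq[OF assms(1) k(1) k(2)] .
  ultimately have "conj_class H (KK H l r G g (l a y)) = conj_class H (KK H l r G g y)"
    using conj_class_conj[OF grpH assms(2) k(1)] k'_def by simp
  then have "invt H l r G g (l a y) = invt H l r G g y" unfolding invt_def OS by simp
  moreover have "good g (l a y)" unfolding good_def using e k' by blast
  ultimately show ?thesis by simp
qed

end

locale fbasis = fbasis0 H G X l r S
  for H :: "('h, 'a) monoid_scheme" and G :: "('g, 'c) monoid_scheme"
    and X :: "'b set" and l :: "'h \<Rightarrow> 'b \<Rightarrow> 'b" and r :: "'b \<Rightarrow> 'g \<Rightarrow> 'b" and S +
  assumes fin: "finite S"
begin

context fixes g assumes g: "g \<in> carrier G"
begin

abbreviation "pi \<equiv> wperm H l r S g"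

lemma OS_S:
  assumes "s \<in> S"
  shows "OS H l r G g s = left_orbit H l ` perm_orbit pi s"
proof -
  have "\<And>n. left_orbit H l (r s (g [^]\<^bsub>G\<^esub> n)) = left_orbit H l ((pi ^^ n) s)"
  proof -
    fix n
    have "(pi ^^ n) s \<in> X" using funpow_in[OF pi_img[OF g] assms] S_X by blast
    then show "left_orbit H l (r s (g [^]\<^bsub>G\<^esub> n)) = left_orbit H l ((pi ^^ n) s)"
      using cp_A[OF g assms, of n] left_orbit_l by simp
  qed
  then have "OS H l r G g s = {left_orbit H l ((pi ^^ n) s) | n. True}" unfolding OS_def by simp
  also have "\<dots> = left_orbit H l ` perm_orbit pi s"
  proof
    show "{left_orbit H l ((pi ^^ n) s) | n. True} \<subseteq> left_orbit H l ` perm_orbit pi s"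
      unfolding perm_orbit_def by blast
    show "left_orbit H l ` perm_orbit pi s \<subseteq> {left_orbit H l ((pi ^^ n) s) | n. True}"
      unfolding perm_orbit_def by blast
  qed
  finally show ?thesis .
qed

lemma card_OS:
  assumes "s \<in> S"
  shows "card (OS H l r G g s) = period pi s"
proof -
  have "card (OS H l r G g s) = card (perm_orbit pi s)"
    unfolding OS_S[OF assms]
    using card_image[OF inj_on_subset[OF left_orbit_inj perm_orbit_sub[OF fin pi_inj[OF g] pi_img[OF g] assms]]] .
  then show ?thesis using card_perm_orbit[OF fin pi_inj[OF g] pi_img[OF g] assms] by simp
qed

lemma invt_S:
  assumes "s \<in> S"
  shows "invt H l r G g s = (period pi s, conj_class H (cycle_prod H l r S g s (period pi s))) \<and> good g s"
proof -
  have pf: "(pi ^^ period pi s) s = s" using period_fix[OF fin pi_inj[OF g] pi_img[OF g] assms] .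
  have e: "r s (g [^]\<^bsub>G\<^esub> card (OS H l r G g s)) = l (cycle_prod H l r S g s (period pi s)) s"
    using cp_A[OF g assms, of "period pi s"] pf card_OS[OF assms] by simp
  have c: "cycle_prod H l r S g s (period pi s) \<in> carrier H" using cp_closed[OF g assms] .
  have "KK H l r G g s = cycle_prod H l r S g s (period pi s)"
    using KK_eq[OF _ c e] assms S_X by blast
  then show ?thesis unfolding invt_def good_def using card_OS[OF assms] c e by auto
qed

lemma lift_Rm:
  assumes rep: "\<forall>Q\<in>wreath_orbits H l r S g. rep Q \<in> Q"
  shows "image_mset (invt H l r G g) (mset_set S) = Rm (lift H l r S g rep)"
    and "\<forall>v\<in># lift H l r S g rep. 0 < fst v"
proof -
  let ?P = "wreath_orbits H l r S g"
  let ?F = "\<lambda>Q. (card Q, conj_class H (cycle_prod H l r S g (rep Q) (card Q)))"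
  note pl = fin pi_inj[OF g] pi_img[OF g]
  have P: "?P = perm_orbit pi ` S" unfolding wreath_orbits_def by simp
  have sub: "\<forall>Q\<in>?P. Q \<subseteq> S" using P perm_orbit_sub[OF pl] by blast
  have un: "\<Union>?P = S"
  proof
    show "\<Union>?P \<subseteq> S" using sub by auto
    show "S \<subseteq> \<Union>?P"
    proof
      fix s assume "s \<in> S"
      then have "s \<in> perm_orbit pi s" "perm_orbit pi s \<in> ?P" using P self_in_perm_orbit[OF pl] by auto
      then show "s \<in> \<Union>?P" by blast
    qed
  qed
  have same: "\<And>s t. s \<in> S \<Longrightarrow> t \<in> perm_orbit pi s \<Longrightarrow> perm_orbit pi t = perm_orbit pi s"
    by (rule perm_orbit_same[OF pl])
  have disj: "\<forall>Q1\<in>?P. \<forall>Q2\<in>?P. Q1 \<noteq> Q2 \<longrightarrow> Q1 \<inter> Q2 = {}"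
  proof (intro ballI impI)
    fix Q1 Q2 assume Q: "Q1 \<in> ?P" "Q2 \<in> ?P" "Q1 \<noteq> Q2"
    obtain s1 where s1: "s1 \<in> S" "Q1 = perm_orbit pi s1" using P Q by blast
    obtain s2 where s2: "s2 \<in> S" "Q2 = perm_orbit pi s2" using P Q by blast
    show "Q1 \<inter> Q2 = {}"
    proof (rule ccontr)
      assume "Q1 \<inter> Q2 \<noteq> {}"
      then obtain t where t: "t \<in> Q1" "t \<in> Q2" by blast
      have "perm_orbit pi t = Q1" using same[OF s1(1)] t(1) s1(2) by simp
      moreover have "perm_orbit pi t = Q2" using same[OF s2(1)] t(2) s2(2) by simp
      ultimately show False using Q(3) by simp
    qed
  qed
  have cst: "\<forall>Q\<in>?P. \<forall>t\<in>Q. invt H l r G g t = ?F Q"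
  proof (intro ballI)
    fix Q t assume Q: "Q \<in> ?P" and t: "t \<in> Q"
    obtain s0 where s0: "s0 \<in> S" "Q = perm_orbit pi s0" using P Q by blast
    have tS: "t \<in> S" using t sub Q by blast
    have rQ: "rep Q \<in> Q" using rep Q by blast
    have ot: "perm_orbit pi t = Q" using same s0 t by blast
    have cQ: "card Q = period pi t" using card_perm_orbit[OF pl tS] ot by simp
    have cQ0: "card Q = period pi s0" using card_perm_orbit[OF pl s0(1)] s0 by simp
    have pf: "(pi ^^ card Q) s0 = s0" using period_fix[OF pl s0(1)] cQ0 by simp
    have cls: "\<And>u. u \<in> Q \<Longrightarrow> conj_class H (cycle_prod H l r S g u (card Q)) = conj_class H (cycle_prod H l r S g s0 (card Q))"
    proof -
      fix u assume "u \<in> Q"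
      then obtain i where "u = (pi ^^ i) s0" using s0 unfolding perm_orbit_def by blast
      then show "conj_class H (cycle_prod H l r S g u (card Q)) = conj_class H (cycle_prod H l r S g s0 (card Q))"
        using cp_iter_class[OF g s0(1) pf] by simp
    qed
    have "invt H l r G g t = (card Q, conj_class H (cycle_prod H l r S g t (card Q)))"
      using invt_S[OF tS] cQ by simp
    then show "invt H l r G g t = ?F Q" using cls[OF t] cls[OF rQ] by simp
  qed
  have fstF: "\<forall>Q\<in>?P. fst (?F Q) = card Q" by simp
  show "image_mset (invt H l r G g) (mset_set S) = Rm (lift H l r S g rep)"
    unfolding lift_def using part_Rm[OF fin sub un disj cst fstF] .
  have finP: "finite ?P" using P fin by simp
  have "\<forall>Q\<in>?P. 0 < card Q"
  proof
    fix Q assume Q: "Q \<in> ?P"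
    then have "Q \<noteq> {}" using rep by blast
    moreover have "finite Q" using Q sub fin finite_subset by blast
    ultimately show "0 < card Q" by (simp add: card_gt_0_iff)
  qed
  then show "\<forall>v\<in># lift H l r S g rep. 0 < fst v"
    unfolding lift_def using finP by auto
qed

end
end

context fbis
begin

lemma phi_pow:
  assumes X: "\<And>y. y \<in> X \<Longrightarrow> \<phi> y \<in> X" and I: "\<And>y. y \<in> X \<Longrightarrow> \<phi> (r y gA) = r (\<phi> y) gB"
    and g: "gA \<in> carrier G" "gB \<in> carrier G" and y: "y \<in> X"
  shows "\<phi> (r y (gA [^]\<^bsub>G\<^esub> (n::nat))) = r (\<phi> y) (gB [^]\<^bsub>G\<^esub> n)"
  using y
proof (induction n arbitrary: y)
  case 0 then show ?case using r_one X by simp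
next
  case (Suc n)
  have ry: "r y gA \<in> X" using r_X g Suc.prems by blast
  have p1: "gA [^]\<^bsub>G\<^esub> Suc n = gA \<otimes>\<^bsub>G\<^esub> gA [^]\<^bsub>G\<^esub> n" using G.nat_pow_Suc2[OF g(1)] .
  have p2: "gB [^]\<^bsub>G\<^esub> Suc n = gB \<otimes>\<^bsub>G\<^esub> gB [^]\<^bsub>G\<^esub> n" using G.nat_pow_Suc2[OF g(2)] .
  have "r y (gA [^]\<^bsub>G\<^esub> Suc n) = r (r y gA) (gA [^]\<^bsub>G\<^esub> n)"
    unfolding p1 using r_mult[OF g(1) G.nat_pow_closed[OF g(1)] Suc.prems] .
  moreover have "r (\<phi> y) (gB [^]\<^bsub>G\<^esub> Suc n) = r (r (\<phi> y) gB) (gB [^]\<^bsub>G\<^esub> n)"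
    unfolding p2 using r_mult[OF g(2) G.nat_pow_closed[OF g(2)] X[OF Suc.prems]] .
  ultimately show ?case using Suc.IH[OF ry] I[OF Suc.prems] by simp
qed

lemma invt_phi:
  assumes X: "\<And>y. y \<in> X \<Longrightarrow> \<phi> y \<in> X" and I: "\<And>y. y \<in> X \<Longrightarrow> \<phi> (r y g1) = r (\<phi> y) g2"
    and g: "g1 \<in> carrier G" "g2 \<in> carrier G"
    and inj: "inj_on \<phi> X" and L: "\<And>h y. h \<in> carrier H \<Longrightarrow> y \<in> X \<Longrightarrow> \<phi> (l h y) = l h (\<phi> y)"
    and y: "y \<in> X" and gd: "good g1 y"
  shows "invt H l r G g2 (\<phi> y) = invt H l r G g1 y \<and> good g2 (\<phi> y)"
proof -
  have lo: "left_orbit H l (\<phi> z) = \<phi> ` left_orbit H l z" if z: "z \<in> X" for z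
  proof
    show "left_orbit H l (\<phi> z) \<subseteq> \<phi> ` left_orbit H l z"
    proof
      fix w assume "w \<in> left_orbit H l (\<phi> z)"
      then obtain h where h: "h \<in> carrier H" "w = l h (\<phi> z)" unfolding left_orbit_def by blast
      then have "w = \<phi> (l h z)" using L z by simp
      moreover have "l h z \<in> left_orbit H l z" unfolding left_orbit_def using h by blast
      ultimately show "w \<in> \<phi> ` left_orbit H l z" by blast
    qed
    show "\<phi> ` left_orbit H l z \<subseteq> left_orbit H l (\<phi> z)"
      unfolding left_orbit_def using L z by auto
  qed
  have lsub: "left_orbit H l z \<subseteq> X" if z: "z \<in> X" for z
    unfolding left_orbit_def using l_X z by auto
  have "\<And>n::nat. left_orbit H l (r (\<phi> y) (g2 [^]\<^bsub>G\<^esub> n)) = \<phi> ` left_orbit H l (r y (g1 [^]\<^bsub>G\<^esub> n))"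
  proof -
    fix n :: nat
    have ryX: "r y (g1 [^]\<^bsub>G\<^esub> n) \<in> X" using r_X g y by simp
    have a1: "left_orbit H l (\<phi> (r y (g1 [^]\<^bsub>G\<^esub> n))) = \<phi> ` left_orbit H l (r y (g1 [^]\<^bsub>G\<^esub> n))"
      by (rule lo[OF ryX])
    have a2: "\<phi> (r y (g1 [^]\<^bsub>G\<^esub> n)) = r (\<phi> y) (g2 [^]\<^bsub>G\<^esub> n)"
      by (rule phi_pow[where \<phi>=\<phi> and gA=g1 and gB=g2, OF X I g y])
    show "left_orbit H l (r (\<phi> y) (g2 [^]\<^bsub>G\<^esub> n)) = \<phi> ` left_orbit H l (r y (g1 [^]\<^bsub>G\<^esub> n))"
      using a1 a2 by simp
  qed
  then have OSe: "OS H l r G g2 (\<phi> y) = (\<lambda>A. \<phi> ` A) ` OS H l r G g1 y"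
    unfolding OS_def by blast
  have "\<Union>(OS H l r G g1 y) \<subseteq> X"
  proof
    fix w assume "w \<in> \<Union>(OS H l r G g1 y)"
    then obtain n :: nat where n: "w \<in> left_orbit H l (r y (g1 [^]\<^bsub>G\<^esub> n))" unfolding OS_def by blast
    have "r y (g1 [^]\<^bsub>G\<^esub> n) \<in> X" using r_X g y by simp
    then show "w \<in> X" using lsub n by blast
  qed
  then have "inj_on ((`) \<phi>) (OS H l r G g1 y)" using inj_on_image inj_on_subset inj by metis
  then have cardeq: "card (OS H l r G g2 (\<phi> y)) = card (OS H l r G g1 y)"
    unfolding OSe by (rule card_image)
  obtain k where k: "k \<in> carrier H" "r y (g1 [^]\<^bsub>G\<^esub> card (OS H l r G g1 y)) = l k y"
    using gd unfolding good_def by blast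
  have e: "r (\<phi> y) (g2 [^]\<^bsub>G\<^esub> card (OS H l r G g2 (\<phi> y))) = l k (\<phi> y)"
    unfolding cardeq using phi_pow[where \<phi>=\<phi> and gA=g1 and gB=g2, OF X I g y] k L y by metis
  have "KK H l r G g2 (\<phi> y) = k" using KK_eq[OF X[OF y] k(1) e] .
  moreover have "KK H l r G g1 y = k" using KK_eq[OF y k] .
  ultimately show ?thesis unfolding invt_def good_def using cardeq e k(1) by auto
qed

lemma general:
  assumes S1: "is_basis H X l S1" "finite S1" and S2: "is_basis H X l S2"
    and g: "g1 \<in> carrier G" "g2 \<in> carrier G"
    and X: "\<And>y. y \<in> X \<Longrightarrow> \<phi> y \<in> X" and sur: "\<And>y. y \<in> X \<Longrightarrow> \<exists>z\<in>X. y = \<phi> z"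
    and inj: "inj_on \<phi> X" and L: "\<And>h y. h \<in> carrier H \<Longrightarrow> y \<in> X \<Longrightarrow> \<phi> (l h y) = l h (\<phi> y)"
    and I: "\<And>y. y \<in> X \<Longrightarrow> \<phi> (r y g1) = r (\<phi> y) g2"
    and rep1: "\<forall>Q\<in>wreath_orbits H l r S1 g1. rep1 Q \<in> Q"
    and rep2: "\<forall>Q\<in>wreath_orbits H l r S2 g2. rep2 Q \<in> Q"
  shows "lift H l r S1 g1 rep1 = lift H l r S2 g2 rep2"
proof -
  interpret B1: fbasis H G X l r S1
    using bis lf S1 by (simp add: fbasis_def fbasis0_def fbasis_axioms_def fbasis0_axioms_def fbis_def)
  interpret B2: fbasis0 H G X l r S2
    using bis lf S2 by (simp add: fbasis0_def fbasis0_axioms_def fbis_def)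
  define \<beta> where "\<beta> s = (SOME t. t \<in> S2 \<and> (\<exists>a\<in>carrier H. t = l a (\<phi> s)))" for s
  have \<beta>: "\<beta> s \<in> S2 \<and> (\<exists>a\<in>carrier H. \<beta> s = l a (\<phi> s))" if s: "s \<in> S1" for s
  proof -
    have "\<phi> s \<in> X" using X s B1.S_X by blast
    then obtain h t where ht: "h \<in> carrier H" "t \<in> S2" "\<phi> s = l h t" using B2.decomp by blast
    have "t = l (inv\<^bsub>H\<^esub> h) (\<phi> s)" using ht l_back B2.S_X by auto
    then have "\<exists>t. t \<in> S2 \<and> (\<exists>a\<in>carrier H. t = l a (\<phi> s))" using ht by blast
    then show ?thesis unfolding \<beta>_def by (rule someI_ex)
  qed
  have \<beta>inj: "inj_on \<beta> S1"
  proof (rule inj_onI)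
    fix s s' assume ss: "s \<in> S1" "s' \<in> S1" "\<beta> s = \<beta> s'"
    obtain a where a: "a \<in> carrier H" "\<beta> s = l a (\<phi> s)" using \<beta>[OF ss(1)] by blast
    obtain a' where a': "a' \<in> carrier H" "\<beta> s' = l a' (\<phi> s')" using \<beta>[OF ss(2)] by blast
    have sX: "s \<in> X" "s' \<in> X" using ss B1.S_X by auto
    have "\<phi> s = l (inv\<^bsub>H\<^esub> a) (l a' (\<phi> s'))" using a a' ss(3) l_back X sX by metis
    also have "\<dots> = l (inv\<^bsub>H\<^esub> a \<otimes>\<^bsub>H\<^esub> a') (\<phi> s')" using l_mult a a' X sX by simp
    also have "\<dots> = \<phi> (l (inv\<^bsub>H\<^esub> a \<otimes>\<^bsub>H\<^esub> a') s')" using L a a' sX by simp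
    finally have "s = l (inv\<^bsub>H\<^esub> a \<otimes>\<^bsub>H\<^esub> a') s'" using inj sX l_X a a' unfolding inj_on_def
      by (metis H.inv_closed H.m_closed)
    then have "l \<one>\<^bsub>H\<^esub> s = l (inv\<^bsub>H\<^esub> a \<otimes>\<^bsub>H\<^esub> a') s'" using l_one sX by simp
    from B1.uniq[OF ss(1,2) H.one_closed _ this] show "s = s'" using a a' by simp
  qed
  have \<beta>img: "\<beta> ` S1 = S2"
  proof
    show "\<beta> ` S1 \<subseteq> S2" using \<beta> by blast
    show "S2 \<subseteq> \<beta> ` S1"
    proof
      fix t assume t: "t \<in> S2"
      then have tX: "t \<in> X" using B2.S_X by blast
      obtain z where z: "z \<in> X" "t = \<phi> z" using sur[OF tX] by blast
      obtain h s where hs: "h \<in> carrier H" "s \<in> S1" "z = l h s" using B1.decomp[OF z(1)] by blast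
      have sX: "s \<in> X" using hs B1.S_X by blast
      have t2: "t = l h (\<phi> s)" using z hs L sX by simp
      obtain a where a: "a \<in> carrier H" "\<beta> s = l a (\<phi> s)" using \<beta>[OF hs(2)] by blast
      have bs: "\<beta> s \<in> S2" using \<beta>[OF hs(2)] by blast
      have "\<phi> s = l (inv\<^bsub>H\<^esub> h) t" using t2 l_back X sX hs by simp
      then have "\<beta> s = l (a \<otimes>\<^bsub>H\<^esub> inv\<^bsub>H\<^esub> h) t" using a l_mult hs tX by simp
      then have "l \<one>\<^bsub>H\<^esub> (\<beta> s) = l (a \<otimes>\<^bsub>H\<^esub> inv\<^bsub>H\<^esub> h) t" using l_one bs B2.S_X by auto
      from B2.uniq[OF bs t H.one_closed _ this] have "\<beta> s = t" using a hs by simp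
      then show "t \<in> \<beta> ` S1" using hs by blast
    qed
  qed
  have finS2: "finite S2" using \<beta>img S1(2) by blast
  interpret B2': fbasis H G X l r S2
    using bis lf S2 finS2 by (simp add: fbasis_def fbasis0_def fbasis_axioms_def fbasis0_axioms_def fbis_def)
  have inveq: "invt H l r G g2 (\<beta> s) = invt H l r G g1 s" if s: "s \<in> S1" for s
  proof -
    have sX: "s \<in> X" using s B1.S_X by blast
    have i1: "good g1 s" using B1.invt_S[OF g(1) s] by blast
    have i2: "invt H l r G g2 (\<phi> s) = invt H l r G g1 s \<and> good g2 (\<phi> s)"
      using invt_phi[OF X I g inj L sX i1] .
    obtain a where a: "a \<in> carrier H" "\<beta> s = l a (\<phi> s)" using \<beta>[OF s] by blast
    have "invt H l r G g2 (\<beta> s) = invt H l r G g2 (\<phi> s)"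
      unfolding a(2) using invt_l[OF X[OF sX] a(1) g(2)] i2 by blast
    then show ?thesis using i2 by simp
  qed
  have "image_mset (invt H l r G g2) (mset_set S2) = image_mset (invt H l r G g2) (image_mset \<beta> (mset_set S1))"
    using image_mset_mset_set[OF \<beta>inj] \<beta>img by simp
  also have "\<dots> = image_mset (invt H l r G g1) (mset_set S1)"
    unfolding multiset.map_comp comp_def using inveq S1(2) by (intro image_mset_cong) simp
  finally have eq: "image_mset (invt H l r G g2) (mset_set S2) = image_mset (invt H l r G g1) (mset_set S1)" .
  have "Rm (lift H l r S1 g1 rep1) = Rm (lift H l r S2 g2 rep2)"
    using B1.lift_Rm(1)[OF g(1) rep1] B2'.lift_Rm(1)[OF g(2) rep2] eq by simp
  then show ?thesis using Rm_inj B1.lift_Rm(2)[OF g(1) rep1] B2'.lift_Rm(2)[OF g(2) rep2] by blast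
qed

end

theorem mainTheorem11:
  fixes H :: "('h, 'a) monoid_scheme" and G :: "('g, 'c) monoid_scheme"
    and X :: "'b set" and l :: "'h \<Rightarrow> 'b \<Rightarrow> 'b" and r :: "'b \<Rightarrow> 'g \<Rightarrow> 'b"
  assumes "biset H G X l r"
    and "left_free H X l"
    and "is_basis H X l S1" and "finite S1"
    and "is_basis H X l S2"
    and "g1 \<in> carrier G" and "g2 \<in> conj_class G g1"
    and "\<forall>Q\<in>wreath_orbits H l r S1 g1. rep1 Q \<in> Q"
    and "\<forall>Q\<in>wreath_orbits H l r S2 g2. rep2 Q \<in> Q"
  shows "lift H l r S1 g1 rep1 = lift H l r S2 g2 rep2"
proof -
  interpret F: fbis H G X l r using assms(1,2) by (simp add: fbis_def)
  obtain x where x: "x \<in> carrier G" "g2 = x \<otimes>\<^bsub>G\<^esub> g1 \<otimes>\<^bsub>G\<^esub> inv\<^bsub>G\<^esub> x"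
    using assms(7) unfolding conj_class_def by blast
  have g2: "g2 \<in> carrier G" using x assms(6) by simp
  have ix: "inv\<^bsub>G\<^esub> x \<in> carrier G" using x by simp
  define \<phi> where "\<phi> y = r y (inv\<^bsub>G\<^esub> x)" for y
  have X: "\<And>y. y \<in> X \<Longrightarrow> \<phi> y \<in> X" unfolding \<phi>_def using F.r_X ix by blast
  have sur: "\<And>y. y \<in> X \<Longrightarrow> \<exists>z\<in>X. y = \<phi> z"
  proof -
    fix y assume y: "y \<in> X"
    have "\<phi> (r y x) = y" unfolding \<phi>_def using F.r_back[OF y x(1)] .
    moreover have "r y x \<in> X" using F.r_X x y by blast
    ultimately show "\<exists>z\<in>X. y = \<phi> z" by metis
  qed
  have inj: "inj_on \<phi> X"
  proof (rule inj_onI)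
    fix y z assume yz: "y \<in> X" "z \<in> X" "\<phi> y = \<phi> z"
    have "r (r y (inv\<^bsub>G\<^esub> x)) (inv\<^bsub>G\<^esub> (inv\<^bsub>G\<^esub> x)) = y" using F.r_back[OF yz(1) ix] .
    moreover have "r (r z (inv\<^bsub>G\<^esub> x)) (inv\<^bsub>G\<^esub> (inv\<^bsub>G\<^esub> x)) = z" using F.r_back[OF yz(2) ix] .
    ultimately show "y = z" using yz(3) unfolding \<phi>_def by metis
  qed
  have L: "\<And>h y. h \<in> carrier H \<Longrightarrow> y \<in> X \<Longrightarrow> \<phi> (l h y) = l h (\<phi> y)"
    unfolding \<phi>_def using F.lr ix by simp
  have I: "\<And>y. y \<in> X \<Longrightarrow> \<phi> (r y g1) = r (\<phi> y) g2"
  proof -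
    fix y assume y: "y \<in> X"
    have eq: "inv\<^bsub>G\<^esub> x \<otimes>\<^bsub>G\<^esub> g2 = g1 \<otimes>\<^bsub>G\<^esub> inv\<^bsub>G\<^esub> x"
      unfolding x(2) using x(1) assms(6) by (simp add: F.G.m_assoc[symmetric])
    have "\<phi> (r y g1) = r y (g1 \<otimes>\<^bsub>G\<^esub> inv\<^bsub>G\<^esub> x)" unfolding \<phi>_def using F.r_mult[OF assms(6) ix y] by simp
    also have "\<dots> = r y (inv\<^bsub>G\<^esub> x \<otimes>\<^bsub>G\<^esub> g2)" using eq by simp
    also have "\<dots> = r (\<phi> y) g2" unfolding \<phi>_def using F.r_mult[OF ix g2 y] .
    finally show "\<phi> (r y g1) = r (\<phi> y) g2" .
  qed
  show ?thesis using F.general[OF assms(3,4,5,6) g2 X sur inj L I assms(8,9)] .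
qed

end
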